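(* Let $(t_i)_{i\in\mathbb{N}}$ be a sequence of real numbers that are algebraically independent over $\mathbb{Q}$, and for distinct $i,j\in\mathbb{N}$ set $P_{i,j} = (t_i + t_j,\ t_i^2 + t_it_j + t_j^2)\in\mathbb{R}^2$ (so $P_{i,j}=P_{j,i}$). Let $i,j,k,\ell,m,n$ be pairwise distinct indices. Then: (a) $P_{i,j}$, $P_{j,k}$, $P_{i,k}$ are collinear; (b) $P_{i,j}$, $P_{i,k}$, $P_{i,\ell}$ are not collinear; (c) $P_{i,j}$, $P_{j,k}$, $P_{k,\ell}$ are not collinear; (d) $P_{i,j}$, $P_{i,k}$, $P_{\ell,m}$ are not collinear; (e) $P_{i,j}$, $P_{k,\ell}$, $P_{m,n}$ are not collinear. *)

theory Defs
  imports "HOL-Analysis.Analysis"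
begin

text \<open>A polynomial is given by a finitely supported coefficient function
  on monomials; a monomial is a finitely supported exponent function.\<close>
definition alg_indep_rat :: "(nat \<Rightarrow> real) \<Rightarrow> bool" where
  "alg_indep_rat t \<longleftrightarrow>
     (\<forall>c :: (nat \<Rightarrow> nat) \<Rightarrow> rat.
        finite {\<alpha>. c \<alpha> \<noteq> 0} \<longrightarrow>
        (\<forall>\<alpha>. c \<alpha> \<noteq> 0 \<longrightarrow> finite {i. \<alpha> i \<noteq> 0}) \<longrightarrow>
        (\<Sum>\<alpha>\<in>{\<alpha>. c \<alpha> \<noteq> 0}. of_rat (c \<alpha>) * (\<Prod>i\<in>{i. \<alpha> i \<noteq> 0}. t i ^ \<alpha> i)) = 0 \<longrightarrow>
        (\<forall>\<alpha>. c \<alpha> = 0))"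

definition Ppt :: "(nat \<Rightarrow> real) \<Rightarrow> nat \<Rightarrow> nat \<Rightarrow> real \<times> real" where
  "Ppt t i j = (t i + t j, (t i)^2 + t i * t j + (t j)^2)"

end

theory Submission
  imports Defs
begin

type_synonym pl = "(rat \<times> nat multiset) list"

definition ev :: "(nat \<Rightarrow> real) \<Rightarrow> pl \<Rightarrow> real" where
  "ev t L = (\<Sum>(q,M)\<leftarrow>L. of_rat q * (\<Prod>i\<in>#M. t i))"

definition pv :: "nat \<Rightarrow> pl" where "pv i = [(1, {#i#})]"
definition pneg :: "pl \<Rightarrow> pl" where "pneg L = map (\<lambda>(q,M). (-q,M)) L"
definition pmul :: "pl \<Rightarrow> pl \<Rightarrow> pl" where
  "pmul L1 L2 = concat (map (\<lambda>(q1,M1). map (\<lambda>(q2,M2). (q1*q2, M1+M2)) L2) L1)"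
definition cf :: "pl \<Rightarrow> nat multiset \<Rightarrow> rat" where
  "cf L M0 = (\<Sum>(q,M)\<leftarrow>L. if M = M0 then q else 0)"

lemma ev_pv[simp]: "ev t (pv i) = t i" by (simp add: ev_def pv_def)
lemma ev_app[simp]: "ev t (L1 @ L2) = ev t L1 + ev t L2" by (simp add: ev_def)
lemma ev_pneg[simp]: "ev t (pneg L) = - ev t L"
  by (induction L) (auto simp: ev_def pneg_def of_rat_minus)
lemma ev_Nil[simp]: "ev t [] = 0" by (simp add: ev_def)
lemma ev_Cons[simp]: "ev t ((q,M)#L) = of_rat q * (\<Prod>i\<in>#M. t i) + ev t L" by (simp add: ev_def)

lemma ev_map_mul: "ev t (map (\<lambda>(q2,M2). (q*q2, M+M2)) L2) = of_rat q * (\<Prod>i\<in>#M. t i) * ev t L2"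
proof (induction L2)
  case Nil show ?case by simp
next
  case (Cons b L2)
  obtain q2 M2 where b: "b = (q2,M2)" by force
  show ?case using Cons by (simp add: b of_rat_mult ring_distribs mult_ac)
qed

lemma ev_pmul[simp]: "ev t (pmul L1 L2) = ev t L1 * ev t L2"
proof (induction L1)
  case Nil then show ?case by (simp add: pmul_def)
next
  case (Cons a L1)
  obtain q M where a: "a = (q,M)" by force
  have "pmul (a # L1) L2 = map (\<lambda>(q2,M2). (q*q2, M+M2)) L2 @ pmul L1 L2"
    by (simp add: pmul_def a)
  then show ?case using Cons by (simp add: a ev_map_mul ring_distribs)
qed

definition cc :: "pl \<Rightarrow> (nat \<Rightarrow> nat) \<Rightarrow> rat" where
  "cc L \<alpha> = (\<Sum>(q,M)\<leftarrow>L. if count M = \<alpha> then q else 0)"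

definition mono :: "(nat \<Rightarrow> real) \<Rightarrow> (nat \<Rightarrow> nat) \<Rightarrow> real" where
  "mono t \<alpha> = (\<Prod>i\<in>{i. \<alpha> i \<noteq> 0}. t i ^ \<alpha> i)"

lemma mono_count: "mono t (count M) = (\<Prod>i\<in>#M. t i)"
proof -
  have "{i. count M i \<noteq> 0} = set_mset M" by auto
  then show ?thesis unfolding mono_def image_prod_mset_multiplicity by simp
qed

lemma sum_cc:
  assumes "finite S" "(\<lambda>(q,M). count M) ` set L \<subseteq> S"
  shows "(\<Sum>\<alpha>\<in>S. of_rat (cc L \<alpha>) * mono t \<alpha>) = ev t L"
  using assms(2)
proof (induction L)
  case Nil then show ?case by (simp add: cc_def ev_def)
next
  case (Cons a L)
  obtain q M where a: "a = (q,M)" by force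
  have cM: "count M \<in> S" using Cons.prems a by auto
  have "(\<Sum>\<alpha>\<in>S. of_rat (cc (a#L) \<alpha>) * mono t \<alpha>)
     = (\<Sum>\<alpha>\<in>S. (if count M = \<alpha> then of_rat q * mono t \<alpha> else 0)) + (\<Sum>\<alpha>\<in>S. of_rat (cc L \<alpha>) * mono t \<alpha>)"
    by (auto simp: cc_def a sum.distrib[symmetric] of_rat_add distrib_right intro!: sum.cong)
  also have "(\<Sum>\<alpha>\<in>S. (if count M = \<alpha> then of_rat q * mono t \<alpha> else 0)) = of_rat q * (\<Prod>i\<in>#M. t i)"
    using cM assms(1) by (simp add: mono_count)
  finally show ?case using Cons by (simp add: a ev_def)
qed

lemma indep_cf:
  assumes "alg_indep_rat t" "ev t L = 0"
  shows "cf L M0 = 0"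
proof -
  define S where "S = (\<lambda>(q,M). count M) ` set L"
  have fS: "finite S" by (simp add: S_def)
  have sub: "{\<alpha>. cc L \<alpha> \<noteq> 0} \<subseteq> S"
  proof
    fix \<alpha> assume "\<alpha> \<in> {\<alpha>. cc L \<alpha> \<noteq> 0}"
    hence "(\<Sum>(q,M)\<leftarrow>L. if count M = \<alpha> then q else 0) \<noteq> 0" by (simp add: cc_def)
    then obtain x where "x \<in> set L" "(case x of (q,M) \<Rightarrow> if count M = \<alpha> then q else 0) \<noteq> 0"
      by (metis (no_types, lifting) sum_list_0 map_eq_conv)
    then show "\<alpha> \<in> S" unfolding S_def by (auto split: if_splits prod.splits intro!: image_eqI)
  qed
  have fin: "finite {\<alpha>. cc L \<alpha> \<noteq> 0}" using sub fS finite_subset by blast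
  have fin2: "\<forall>\<alpha>. cc L \<alpha> \<noteq> 0 \<longrightarrow> finite {i. \<alpha> i \<noteq> 0}"
  proof (intro allI impI)
    fix \<alpha> assume "cc L \<alpha> \<noteq> 0"
    then obtain q M where "\<alpha> = count M" using sub S_def by auto
    then show "finite {i. \<alpha> i \<noteq> 0}" by (simp add: set_mset_def[symmetric])
  qed
  have "(\<Sum>\<alpha>\<in>{\<alpha>. cc L \<alpha> \<noteq> 0}. of_rat (cc L \<alpha>) * mono t \<alpha>) = (\<Sum>\<alpha>\<in>S. of_rat (cc L \<alpha>) * mono t \<alpha>)"
    by (rule sum.mono_neutral_left[OF fS sub]) auto
  also have "\<dots> = 0" using sum_cc[OF fS] assms(2) S_def by simp
  finally have "\<forall>\<alpha>. cc L \<alpha> = 0"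
    using assms(1) fin fin2 unfolding alg_indep_rat_def mono_def by blast
  hence "cc L (count M0) = 0" by blast
  moreover have "cc L (count M0) = cf L M0"
    unfolding cc_def cf_def by (simp add: count_inject)
  ultimately show ?thesis by simp
qed

lemma collinear_det:
  fixes p1 p2 p3 :: "real \<times> real"
  assumes "collinear {p1, p2, p3}"
  shows "(fst p2 - fst p1) * (snd p3 - snd p1) - (fst p3 - fst p1) * (snd p2 - snd p1) = 0"
proof -
  obtain u v where h: "\<forall>x\<in>{p1,p2,p3}. \<exists>c. x = u + c *\<^sub>R v" using assms collinear_alt by blast
  then obtain c1 c2 c3 where "p1 = u + c1 *\<^sub>R v" "p2 = u + c2 *\<^sub>R v" "p3 = u + c3 *\<^sub>R v" by auto
  then show ?thesis by (simp add: algebra_simps)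
qed

definition PP :: "nat \<Rightarrow> nat \<Rightarrow> pl \<times> pl" where
  "PP a b = (pv a @ pv b, pmul (pv a) (pv a) @ pmul (pv a) (pv b) @ pmul (pv b) (pv b))"

definition DD :: "pl \<times> pl \<Rightarrow> pl \<times> pl \<Rightarrow> pl \<times> pl \<Rightarrow> pl" where
  "DD p1 p2 p3 = pmul (fst p2 @ pneg (fst p1)) (snd p3 @ pneg (snd p1))
     @ pneg (pmul (fst p3 @ pneg (fst p1)) (snd p2 @ pneg (snd p1)))"

lemma ev_DD: "ev t (DD (PP a b) (PP c d) (PP e f)) =
  (fst (Ppt t c d) - fst (Ppt t a b)) * (snd (Ppt t e f) - snd (Ppt t a b))
  - (fst (Ppt t e f) - fst (Ppt t a b)) * (snd (Ppt t c d) - snd (Ppt t a b))"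
  by (simp add: DD_def PP_def Ppt_def power2_eq_square) (simp add: algebra_simps)

definition supp :: "pl \<Rightarrow> nat set" where
  "supp L = (\<Union>x\<in>set L. set_mset (snd x))"

lemma supp_pv[simp]: "supp (pv i) = {i}" by (simp add: supp_def pv_def)
lemma supp_app[simp]: "supp (L1 @ L2) = supp L1 \<union> supp L2" by (simp add: supp_def)
lemma supp_pneg[simp]: "supp (pneg L) = supp L" by (force simp: supp_def pneg_def)
lemma supp_pmul: "supp (pmul L1 L2) \<subseteq> supp L1 \<union> supp L2"
  by (force simp: supp_def pmul_def)

lemma supp_pmul_le[simp]: "supp L1 \<subseteq> A \<Longrightarrow> supp L2 \<subseteq> A \<Longrightarrow> supp (pmul L1 L2) \<subseteq> A"
  using supp_pmul by blast

lemma supp_DD: "supp (DD (PP a b) (PP c d) (PP e f)) \<subseteq> {a,b,c,d,e,f}"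
  unfolding DD_def PP_def by simp

definition cfv :: "nat list \<Rightarrow> pl \<Rightarrow> nat multiset \<Rightarrow> rat" where
  "cfv vs L M0 = (\<Sum>(q,M)\<leftarrow>L. if map (count M) vs = map (count M0) vs then q else 0)"

lemma cfv_cf:
  assumes "supp L \<subseteq> set vs" "set_mset M0 \<subseteq> set vs"
  shows "cfv vs L M0 = cf L M0"
  using assms(1)
proof (induction L)
  case Nil then show ?case by (simp add: cfv_def cf_def)
next
  case (Cons a L)
  obtain q M where a: "a = (q,M)" by force
  have sM: "set_mset M \<subseteq> set vs" using Cons.prems a by (auto simp: supp_def)
  have "(map (count M) vs = map (count M0) vs) = (M = M0)"
  proof
    assume h: "map (count M) vs = map (count M0) vs"
    show "M = M0"
    proof (rule multiset_eqI)
      fix x show "count M x = count M0 x"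
      proof (cases "x \<in> set vs")
        case True then show ?thesis using h by auto
      next
        case False then show ?thesis using sM assms(2)
          by (metis count_eq_zero_iff subsetD)
      qed
    qed
  qed simp
  moreover have "supp L \<subseteq> set vs" using Cons.prems by (simp add: supp_def)
  ultimately show ?case using Cons.IH by (simp add: a cfv_def cf_def)
qed

lemma noncol:
  assumes "alg_indep_rat t" "cfv [a,b,c,d,e,f] (DD (PP a b) (PP c d) (PP e f)) N \<noteq> 0"
    "set_mset N \<subseteq> {a,b,c,d,e,f}"
  shows "\<not> collinear {Ppt t a b, Ppt t c d, Ppt t e f}"
proof -
  have "cf (DD (PP a b) (PP c d) (PP e f)) N \<noteq> 0"
    using assms(2,3) cfv_cf[of _ "[a,b,c,d,e,f]" N] supp_DD by simp
  then have "ev t (DD (PP a b) (PP c d) (PP e f)) \<noteq> 0"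
    using indep_cf[OF assms(1)] by blast
  then show ?thesis
    using collinear_det[of "Ppt t a b" "Ppt t c d" "Ppt t e f"] unfolding ev_DD by blast
qed

lemma Cb_cf: assumes ne: "i \<noteq> j" "i \<noteq> k" "i \<noteq> l" "i \<noteq> m" "i \<noteq> n" "j \<noteq> i" "j \<noteq> k" "j \<noteq> l" "j \<noteq> m" "j \<noteq> n" "k \<noteq> i" "k \<noteq> j" "k \<noteq> l" "k \<noteq> m" "k \<noteq> n" "l \<noteq> i" "l \<noteq> j" "l \<noteq> k" "l \<noteq> m" "l \<noteq> n" "m \<noteq> i" "m \<noteq> j" "m \<noteq> k" "m \<noteq> l" "m \<noteq> n" "n \<noteq> i" "n \<noteq> j" "n \<noteq> k" "n \<noteq> l" "n \<noteq> m" shows "cfv [i,j,i,k,i,l] (DD (PP i j) (PP i k) (PP i l)) {#k,l,l#} \<noteq> 0"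
  by (simp add: ne cfv_def DD_def PP_def pmul_def pneg_def pv_def)
lemma Cb: assumes ne: "i \<noteq> j" "i \<noteq> k" "i \<noteq> l" "i \<noteq> m" "i \<noteq> n" "j \<noteq> i" "j \<noteq> k" "j \<noteq> l" "j \<noteq> m" "j \<noteq> n" "k \<noteq> i" "k \<noteq> j" "k \<noteq> l" "k \<noteq> m" "k \<noteq> n" "l \<noteq> i" "l \<noteq> j" "l \<noteq> k" "l \<noteq> m" "l \<noteq> n" "m \<noteq> i" "m \<noteq> j" "m \<noteq> k" "m \<noteq> l" "m \<noteq> n" "n \<noteq> i" "n \<noteq> j" "n \<noteq> k" "n \<noteq> l" "n \<noteq> m" and indep: "alg_indep_rat t" shows "\<not> collinear {Ppt t i j, Ppt t i k, Ppt t i l}"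
  apply (rule noncol[OF indep, where N="{#k,l,l#}"])
  apply (rule Cb_cf[OF ne])
  by simp

lemma Cc_cf: assumes ne: "i \<noteq> j" "i \<noteq> k" "i \<noteq> l" "i \<noteq> m" "i \<noteq> n" "j \<noteq> i" "j \<noteq> k" "j \<noteq> l" "j \<noteq> m" "j \<noteq> n" "k \<noteq> i" "k \<noteq> j" "k \<noteq> l" "k \<noteq> m" "k \<noteq> n" "l \<noteq> i" "l \<noteq> j" "l \<noteq> k" "l \<noteq> m" "l \<noteq> n" "m \<noteq> i" "m \<noteq> j" "m \<noteq> k" "m \<noteq> l" "m \<noteq> n" "n \<noteq> i" "n \<noteq> j" "n \<noteq> k" "n \<noteq> l" "n \<noteq> m" shows "cfv [i,j,j,k,k,l] (DD (PP i j) (PP j k) (PP k l)) {#k,l,l#} \<noteq> 0"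
  by (simp add: ne cfv_def DD_def PP_def pmul_def pneg_def pv_def)
lemma Cc: assumes ne: "i \<noteq> j" "i \<noteq> k" "i \<noteq> l" "i \<noteq> m" "i \<noteq> n" "j \<noteq> i" "j \<noteq> k" "j \<noteq> l" "j \<noteq> m" "j \<noteq> n" "k \<noteq> i" "k \<noteq> j" "k \<noteq> l" "k \<noteq> m" "k \<noteq> n" "l \<noteq> i" "l \<noteq> j" "l \<noteq> k" "l \<noteq> m" "l \<noteq> n" "m \<noteq> i" "m \<noteq> j" "m \<noteq> k" "m \<noteq> l" "m \<noteq> n" "n \<noteq> i" "n \<noteq> j" "n \<noteq> k" "n \<noteq> l" "n \<noteq> m" and indep: "alg_indep_rat t" shows "\<not> collinear {Ppt t i j, Ppt t j k, Ppt t k l}"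
  apply (rule noncol[OF indep, where N="{#k,l,l#}"])
  apply (rule Cc_cf[OF ne])
  by simp

lemma Cd_cf: assumes ne: "i \<noteq> j" "i \<noteq> k" "i \<noteq> l" "i \<noteq> m" "i \<noteq> n" "j \<noteq> i" "j \<noteq> k" "j \<noteq> l" "j \<noteq> m" "j \<noteq> n" "k \<noteq> i" "k \<noteq> j" "k \<noteq> l" "k \<noteq> m" "k \<noteq> n" "l \<noteq> i" "l \<noteq> j" "l \<noteq> k" "l \<noteq> m" "l \<noteq> n" "m \<noteq> i" "m \<noteq> j" "m \<noteq> k" "m \<noteq> l" "m \<noteq> n" "n \<noteq> i" "n \<noteq> j" "n \<noteq> k" "n \<noteq> l" "n \<noteq> m" shows "cfv [i,j,i,k,l,m] (DD (PP i j) (PP i k) (PP l m)) {#k,l,l#} \<noteq> 0"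
  by (simp add: ne cfv_def DD_def PP_def pmul_def pneg_def pv_def)
lemma Cd: assumes ne: "i \<noteq> j" "i \<noteq> k" "i \<noteq> l" "i \<noteq> m" "i \<noteq> n" "j \<noteq> i" "j \<noteq> k" "j \<noteq> l" "j \<noteq> m" "j \<noteq> n" "k \<noteq> i" "k \<noteq> j" "k \<noteq> l" "k \<noteq> m" "k \<noteq> n" "l \<noteq> i" "l \<noteq> j" "l \<noteq> k" "l \<noteq> m" "l \<noteq> n" "m \<noteq> i" "m \<noteq> j" "m \<noteq> k" "m \<noteq> l" "m \<noteq> n" "n \<noteq> i" "n \<noteq> j" "n \<noteq> k" "n \<noteq> l" "n \<noteq> m" and indep: "alg_indep_rat t" shows "\<not> collinear {Ppt t i j, Ppt t i k, Ppt t l m}"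
  apply (rule noncol[OF indep, where N="{#k,l,l#}"])
  apply (rule Cd_cf[OF ne])
  by simp

lemma Ce_cf: assumes ne: "i \<noteq> j" "i \<noteq> k" "i \<noteq> l" "i \<noteq> m" "i \<noteq> n" "j \<noteq> i" "j \<noteq> k" "j \<noteq> l" "j \<noteq> m" "j \<noteq> n" "k \<noteq> i" "k \<noteq> j" "k \<noteq> l" "k \<noteq> m" "k \<noteq> n" "l \<noteq> i" "l \<noteq> j" "l \<noteq> k" "l \<noteq> m" "l \<noteq> n" "m \<noteq> i" "m \<noteq> j" "m \<noteq> k" "m \<noteq> l" "m \<noteq> n" "n \<noteq> i" "n \<noteq> j" "n \<noteq> k" "n \<noteq> l" "n \<noteq> m" shows "cfv [i,j,k,l,m,n] (DD (PP i j) (PP k l) (PP m n)) {#k,m,m#} \<noteq> 0"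
  by (simp add: ne cfv_def DD_def PP_def pmul_def pneg_def pv_def)
lemma Ce: assumes ne: "i \<noteq> j" "i \<noteq> k" "i \<noteq> l" "i \<noteq> m" "i \<noteq> n" "j \<noteq> i" "j \<noteq> k" "j \<noteq> l" "j \<noteq> m" "j \<noteq> n" "k \<noteq> i" "k \<noteq> j" "k \<noteq> l" "k \<noteq> m" "k \<noteq> n" "l \<noteq> i" "l \<noteq> j" "l \<noteq> k" "l \<noteq> m" "l \<noteq> n" "m \<noteq> i" "m \<noteq> j" "m \<noteq> k" "m \<noteq> l" "m \<noteq> n" "n \<noteq> i" "n \<noteq> j" "n \<noteq> k" "n \<noteq> l" "n \<noteq> m" and indep: "alg_indep_rat t" shows "\<not> collinear {Ppt t i j, Ppt t k l, Ppt t m n}"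
  apply (rule noncol[OF indep, where N="{#k,m,m#}"])
  apply (rule Ce_cf[OF ne])
  by simp

theorem claim2p1:
  fixes t :: "nat \<Rightarrow> real" and i j k l m n :: nat
  assumes indep: "alg_indep_rat t"
    and dist: "distinct [i, j, k, l, m, n]"
  shows "collinear {Ppt t i j, Ppt t j k, Ppt t i k}
    \<and> \<not> collinear {Ppt t i j, Ppt t i k, Ppt t i l}
    \<and> \<not> collinear {Ppt t i j, Ppt t j k, Ppt t k l}
    \<and> \<not> collinear {Ppt t i j, Ppt t i k, Ppt t l m}
    \<and> \<not> collinear {Ppt t i j, Ppt t k l, Ppt t m n}"
proof (intro conjI)
  have ne: "i \<noteq> j" "i \<noteq> k" "i \<noteq> l" "i \<noteq> m" "i \<noteq> n" "j \<noteq> i" "j \<noteq> k" "j \<noteq> l" "j \<noteq> m" "j \<noteq> n" "k \<noteq> i" "k \<noteq> j" "k \<noteq> l" "k \<noteq> m" "k \<noteq> n" "l \<noteq> i" "l \<noteq> j" "l \<noteq> k" "l \<noteq> m" "l \<noteq> n" "m \<noteq> i" "m \<noteq> j" "m \<noteq> k" "m \<noteq> l" "m \<noteq> n" "n \<noteq> i" "n \<noteq> j" "n \<noteq> k" "n \<noteq> l" "n \<noteq> m"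
    using dist by auto
  have "\<forall>x\<in>{Ppt t i j, Ppt t j k, Ppt t i k}. \<exists>c. x = Ppt t i j + c *\<^sub>R (1, t i + t j + t k)"
  proof
    fix x assume "x \<in> {Ppt t i j, Ppt t j k, Ppt t i k}"
    then consider "x = Ppt t i j" | "x = Ppt t j k" | "x = Ppt t i k" by blast
    then show "\<exists>c. x = Ppt t i j + c *\<^sub>R (1, t i + t j + t k)"
    proof cases
      case 1 then show ?thesis by (intro exI[of _ 0]) (simp add: zero_prod_def)
    next
      case 2 then show ?thesis
        by (intro exI[of _ "t k - t i"]) (simp add: Ppt_def power2_eq_square algebra_simps)
    next
      case 3 then show ?thesis
        by (intro exI[of _ "t k - t j"]) (simp add: Ppt_def power2_eq_square algebra_simps)
    qed
  qed
  then show "collinear {Ppt t i j, Ppt t j k, Ppt t i k}"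
    unfolding collinear_alt by blast
  show "\<not> collinear {Ppt t i j, Ppt t i k, Ppt t i l}" by (rule Cb[OF ne indep])
  show "\<not> collinear {Ppt t i j, Ppt t j k, Ppt t k l}" by (rule Cc[OF ne indep])
  show "\<not> collinear {Ppt t i j, Ppt t i k, Ppt t l m}" by (rule Cd[OF ne indep])
  show "\<not> collinear {Ppt t i j, Ppt t k l, Ppt t m n}" by (rule Ce[OF ne indep])
qed

end
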